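(* Let $n\ge2$, $\kappa\ge1$ and $G\in\mathcal G_{[n;\kappa]}$ with structure vector $V_G\in\mathbb R^{n\kappa^n}$. Then $G$ is skew-symmetric if and only if $$V_G=V_G\left(P_\sigma\otimes \mathrm{sgn}(\sigma)T_\sigma\right)\quad\text{for all }\sigma\in\mathbf S_n.$$
   Context: $\delta_m^j$ is the $j$-th column of $I_m$, $\mathbf 1_m$ the all-ones column vector of length $m$. For $\sigma\in\mathbf S_n$, $P_\sigma=[\delta_n^{\sigma(1)},\dots,\delta_n^{\sigma(n)}]\in\mathbb R^{n\times n}$. For $i=1,\dots,n$, $\Phi_i=\mathbf 1_{\kappa^{i-1}}^T\otimes I_\kappa\otimes\mathbf 1_{\kappa^{n-i}}^T\in\mathbb R^{\kappa\times\kappa^n}$. The Khatri–Rao product of $A\in\mathbb R^{p\times m}$ and $B\in\mathbb R^{q\times m}$ is $A*B=[\mathrm{Col}_1(A)\otimes\mathrm{Col}_1(B),\dots,\mathrm{Col}_m(A)\otimes\mathrm{Col}_m(B)]$, and $T_\sigma=\Phi_{\sigma^{-1}(1)}*\cdots*\Phi_{\sigma^{-1}(n)}\in\mathbb R^{\kappa^n\times\kappa^n}$. A finite game $G\in\mathcal G_{[n;\kappa]}$ has players $\{1,\dots,n\}$, each with strategy set $\{1,\dots,\kappa\}$, strategy $j$ identified with $\delta_\kappa^j$, and payoffs $c_i$; $V_i^c\in\mathbb R^{\kappa^n}$ is the unique row vector with $c_i(x_1,\dots,x_n)=V_i^c(x_1\otimes\cdots\otimes x_n)$, and $V_G=[V_1^c,\dots,V_n^c]$.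 $G$ is skew-symmetric if for every $\sigma\in\mathbf S_n$, every $i$ and every profile, $c_i(x_1,\dots,x_n)=\mathrm{sgn}(\sigma)\,c_{\sigma(i)}(x_{\sigma^{-1}(1)},\dots,x_{\sigma^{-1}(n)})$. *)

theory Defs
  imports "Jordan_Normal_Form.Matrix" "HOL-Combinatorics.Permutations" "HOL-Library.FuncSet"
begin

(* Matrices are Jordan_Normal_Form matrices; column vectors are m x 1 matrices,
   row vectors are 1 x m matrices. Indices in the paper are 1-based; JNF entries are 0-based. *)

definition kron :: "real mat \<Rightarrow> real mat \<Rightarrow> real mat" where
  "kron A B = mat (dim_row A * dim_row B) (dim_col A * dim_col B)
     (\<lambda>(i,j). A $$ (i div dim_row B, j div dim_col B) * B $$ (i mod dim_row B, j mod dim_col B))"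

definition kron_list :: "real mat list \<Rightarrow> real mat" where
  "kron_list As = foldl kron (hd As) (tl As)"

definition khatri_rao :: "real mat \<Rightarrow> real mat \<Rightarrow> real mat" where
  "khatri_rao A B = mat (dim_row A * dim_row B) (dim_col A)
     (\<lambda>(i,j). A $$ (i div dim_row B, j) * B $$ (i mod dim_row B, j))"

definition khatri_rao_list :: "real mat list \<Rightarrow> real mat" where
  "khatri_rao_list As = foldl khatri_rao (hd As) (tl As)"

(* delta_m^j, j-th column of I_m (1-based j), as an m x 1 matrix *)
definition delta :: "nat \<Rightarrow> nat \<Rightarrow> real mat" where
  "delta m j = mat m 1 (\<lambda>(i,_). if i + 1 = j then 1 else 0)"

definition ones :: "nat \<Rightarrow> real mat" where
  "ones m = mat m 1 (\<lambda>_. 1)"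

(* P_sigma = [delta_n^{sigma(1)}, ..., delta_n^{sigma(n)}] *)
definition perm_mat :: "nat \<Rightarrow> (nat \<Rightarrow> nat) \<Rightarrow> real mat" where
  "perm_mat n \<sigma> = mat n n (\<lambda>(i,j). if i + 1 = \<sigma> (j + 1) then 1 else 0)"

definition Phi :: "nat \<Rightarrow> nat \<Rightarrow> nat \<Rightarrow> real mat" where
  "Phi \<kappa> n i = kron (kron (transpose_mat (ones (\<kappa> ^ (i - 1)))) (one_mat \<kappa>))
                      (transpose_mat (ones (\<kappa> ^ (n - i))))"

definition T_mat :: "nat \<Rightarrow> nat \<Rightarrow> (nat \<Rightarrow> nat) \<Rightarrow> real mat" where
  "T_mat \<kappa> n \<sigma> = khatri_rao_list (map (\<lambda>k. Phi \<kappa> n (Hilbert_Choice.inv \<sigma> k)) [1..<n+1])"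

definition profiles :: "nat \<Rightarrow> nat \<Rightarrow> (nat \<Rightarrow> nat) set" where
  "profiles n \<kappa> = PiE {1..n} (\<lambda>_. {1..\<kappa>})"

(* x_1 \<otimes> ... \<otimes> x_n with x_k identified with delta_kappa^{x k} *)
definition profile_vec :: "nat \<Rightarrow> nat \<Rightarrow> (nat \<Rightarrow> nat) \<Rightarrow> real mat" where
  "profile_vec n \<kappa> x = kron_list (map (\<lambda>k. delta \<kappa> (x k)) [1..<n+1])"

(* A game in G_[n;kappa] is given by its payoffs c i x (player i, profile x).
   V_i^c: the unique row vector with c_i(x) = V_i^c (x_1 \<otimes> ... \<otimes> x_n). *)
definition struct_row :: "nat \<Rightarrow> nat \<Rightarrow> (nat \<Rightarrow> (nat \<Rightarrow> nat) \<Rightarrow> real) \<Rightarrow> nat \<Rightarrow> real mat" where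
  "struct_row n \<kappa> c i = (THE v. v \<in> carrier_mat 1 (\<kappa> ^ n) \<and>
      (\<forall>x \<in> profiles n \<kappa>. (v * profile_vec n \<kappa> x) $$ (0,0) = c i x))"

definition struct_vec :: "nat \<Rightarrow> nat \<Rightarrow> (nat \<Rightarrow> (nat \<Rightarrow> nat) \<Rightarrow> real) \<Rightarrow> real mat" where
  "struct_vec n \<kappa> c = mat 1 (n * \<kappa> ^ n)
     (\<lambda>(_,j). struct_row n \<kappa> c (j div \<kappa> ^ n + 1) $$ (0, j mod \<kappa> ^ n))"

definition skew_symmetric :: "nat \<Rightarrow> nat \<Rightarrow> (nat \<Rightarrow> (nat \<Rightarrow> nat) \<Rightarrow> real) \<Rightarrow> bool" where
  "skew_symmetric n \<kappa> c \<longleftrightarrow>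
     (\<forall>\<sigma>. \<sigma> permutes {1..n} \<longrightarrow> (\<forall>i \<in> {1..n}. \<forall>x \<in> profiles n \<kappa>.
        c i x = real_of_int (sign \<sigma>) * c (\<sigma> i) (\<lambda>j. x (Hilbert_Choice.inv \<sigma> j))))"

end

theory Submission
  imports Defs
begin


definition dec :: "nat \<Rightarrow> nat \<Rightarrow> nat \<Rightarrow> (nat \<Rightarrow> nat)" where
  "dec n \<kappa> r = (\<lambda>k. if k \<in> {1..n} then r div \<kappa> ^ (n - k) mod \<kappa> + 1 else undefined)"

lemma dec_in: "\<kappa> \<ge> 1 \<Longrightarrow> dec n \<kappa> r \<in> profiles n \<kappa>"
  unfolding dec_def profiles_def by (auto simp: PiE_def extensional_def) (metis Suc_le_eq mod_less_divisor neq0_conv not_one_le_zero)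

lemma digits_inj:
  "(r::nat) < \<kappa>^m \<Longrightarrow> s < \<kappa>^m \<Longrightarrow> (\<forall>k\<in>{1..m}. r div \<kappa>^(m-k) mod \<kappa> = s div \<kappa>^(m-k) mod \<kappa>) \<Longrightarrow> r = s"
proof (induction m arbitrary: r s)
  case 0 then show ?case by simp
next
  case (Suc m)
  have k0: "\<kappa> > 0" using Suc.prems(1) by (cases "\<kappa> = 0") auto
  have "r div \<kappa> = s div \<kappa>"
  proof (rule Suc.IH)
    show "r div \<kappa> < \<kappa>^m" using Suc.prems(1) k0 by (simp add: div_less_iff_less_mult mult.commute)
    show "s div \<kappa> < \<kappa>^m" using Suc.prems(2) k0 by (simp add: div_less_iff_less_mult mult.commute)
    show "\<forall>k\<in>{1..m}. r div \<kappa> div \<kappa> ^ (m - k) mod \<kappa> = s div \<kappa> div \<kappa> ^ (m - k) mod \<kappa>"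
    proof
      fix k assume k: "k \<in> {1..m}"
      have "\<kappa> ^ (Suc m - k) = \<kappa> * \<kappa>^(m-k)" using k by (simp add: Suc_diff_le)
      then show "r div \<kappa> div \<kappa> ^ (m - k) mod \<kappa> = s div \<kappa> div \<kappa> ^ (m - k) mod \<kappa>"
        using Suc.prems(3) k by (metis atLeastAtMost_iff div_mult2_eq le_SucI)
    qed
  qed
  moreover have "r mod \<kappa> = s mod \<kappa>" using Suc.prems(3) by (drule_tac x="Suc m" in bspec) auto
  ultimately show ?case by (metis div_mult_mod_eq)
qed

lemma dec_inj: "r < \<kappa>^n \<Longrightarrow> s < \<kappa>^n \<Longrightarrow> dec n \<kappa> r = dec n \<kappa> s \<Longrightarrow> r = s"
  apply (rule digits_inj[of r \<kappa> n s], assumption+)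
  apply (auto simp: dec_def fun_eq_iff)
  by (metis atLeastAtMost_iff add_right_cancel)

lemma card_profiles: "card (profiles n \<kappa>) = \<kappa>^n"
  unfolding profiles_def by (simp add: card_PiE)

lemma dec_surj: assumes "\<kappa> \<ge> 1" "x \<in> profiles n \<kappa>" shows "\<exists>r<\<kappa>^n. dec n \<kappa> r = x"
proof -
  have inj: "inj_on (dec n \<kappa>) {..<\<kappa>^n}" by (auto intro!: inj_onI dec_inj)
  have sub: "dec n \<kappa> ` {..<\<kappa>^n} \<subseteq> profiles n \<kappa>" using dec_in assms(1) by auto
  have fin: "finite (profiles n \<kappa>)" unfolding profiles_def by (simp add: finite_PiE)
  have "card (dec n \<kappa> ` {..<\<kappa>^n}) = card (profiles n \<kappa>)"
    using inj by (simp add: card_image card_profiles)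
  then have "dec n \<kappa> ` {..<\<kappa>^n} = profiles n \<kappa>" using card_subset_eq[OF fin sub] by simp
  then show ?thesis using assms(2) by (metis imageE lessThan_iff)
qed



lemma map_upt_snoc: "map f [1..<Suc m + 1] = map f [1..<m+1] @ [f (Suc m)]"
  by simp

lemma foldl_snoc_ht: "xs \<noteq> [] \<Longrightarrow> foldl g (hd (xs@[y])) (tl (xs@[y])) = g (foldl g (hd xs) (tl xs)) y"
  by (cases xs) auto

lemma kr_entry:
  assumes "\<forall>k\<in>{1..Suc m}. f k \<in> carrier_mat \<kappa> C"
  shows "khatri_rao_list (map f [1..<Suc m+1]) \<in> carrier_mat (\<kappa>^Suc m) C \<and>
    (\<forall>r<\<kappa>^Suc m. \<forall>c<C. khatri_rao_list (map f [1..<Suc m+1]) $$ (r,c) =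
        (\<Prod>k\<in>{1..Suc m}. f k $$ (r div \<kappa>^(Suc m - k) mod \<kappa>, c)))"
  using assms
proof (induction m)
  case 0
  have f1: "f 1 \<in> carrier_mat \<kappa> C" using 0 by auto
  show ?case using f1 by (auto simp: khatri_rao_list_def)
next
  case (Suc m)
  let ?A = "khatri_rao_list (map f [1..<Suc m+1])"
  have IH: "?A \<in> carrier_mat (\<kappa>^Suc m) C \<and>
    (\<forall>r<\<kappa>^Suc m. \<forall>c<C. ?A $$ (r,c) = (\<Prod>k\<in>{1..Suc m}. f k $$ (r div \<kappa>^(Suc m - k) mod \<kappa>, c)))"
    using Suc by auto
  have fS: "f (Suc (Suc m)) \<in> carrier_mat \<kappa> C" using Suc.prems by auto
  have eq: "khatri_rao_list (map f [1..<Suc (Suc m)+1]) = khatri_rao ?A (f (Suc (Suc m)))"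
    unfolding khatri_rao_list_def map_upt_snoc[of f "Suc m"]
    by (rule foldl_snoc_ht) simp
  show ?case
  proof (intro conjI allI impI)
    show "khatri_rao_list (map f [1..<Suc (Suc m)+1]) \<in> carrier_mat (\<kappa>^Suc (Suc m)) C"
      unfolding eq khatri_rao_def using IH fS by (auto simp: mult.commute)
    fix r c assume r: "r < \<kappa>^Suc (Suc m)" and c: "c < C"
    have k0: "\<kappa> > 0" using r by (cases "\<kappa> = 0") auto
    have rd: "r div \<kappa> < \<kappa>^Suc m" using r k0 by (simp add: div_less_iff_less_mult mult.commute)
    have "khatri_rao_list (map f [1..<Suc (Suc m)+1]) $$ (r,c) = ?A $$ (r div \<kappa>, c) * f (Suc (Suc m)) $$ (r mod \<kappa>, c)"
      unfolding eq khatri_rao_def using IH fS r c by (auto simp: mult.commute)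
    also have "?A $$ (r div \<kappa>, c) = (\<Prod>k\<in>{1..Suc m}. f k $$ (r div \<kappa>^(Suc (Suc m) - k) mod \<kappa>, c))"
    proof -
      have "?A $$ (r div \<kappa>, c) = (\<Prod>k\<in>{1..Suc m}. f k $$ (r div \<kappa> div \<kappa>^(Suc m - k) mod \<kappa>, c))"
        using IH rd c by auto
      also have "\<dots> = (\<Prod>k\<in>{1..Suc m}. f k $$ (r div \<kappa>^(Suc (Suc m) - k) mod \<kappa>, c))"
      proof (rule prod.cong[OF refl])
        fix k assume k: "k \<in> {1..Suc m}"
        have "\<kappa> ^ (Suc (Suc m) - k) = \<kappa> * \<kappa>^(Suc m-k)" using k by (simp add: Suc_diff_le)
        then show "f k $$ (r div \<kappa> div \<kappa>^(Suc m - k) mod \<kappa>, c) = f k $$ (r div \<kappa>^(Suc (Suc m) - k) mod \<kappa>, c)"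
          by (simp add: div_mult2_eq)
      qed
      finally show ?thesis .
    qed
    finally show "khatri_rao_list (map f [1..<Suc (Suc m)+1]) $$ (r,c) =
        (\<Prod>k\<in>{1..Suc (Suc m)}. f k $$ (r div \<kappa>^(Suc (Suc m) - k) mod \<kappa>, c))"
      by (simp add: prod.cl_ivl_Suc)
  qed
qed

lemma kron_entry:
  assumes "\<forall>k\<in>{1..Suc m}. f k \<in> carrier_mat \<kappa> 1"
  shows "kron_list (map f [1..<Suc m+1]) \<in> carrier_mat (\<kappa>^Suc m) 1 \<and>
    (\<forall>r<\<kappa>^Suc m. kron_list (map f [1..<Suc m+1]) $$ (r,0) =
        (\<Prod>k\<in>{1..Suc m}. f k $$ (r div \<kappa>^(Suc m - k) mod \<kappa>, 0)))"
  using assms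
proof (induction m)
  case 0
  have f1: "f 1 \<in> carrier_mat \<kappa> 1" using 0 by auto
  show ?case using f1 by (auto simp: kron_list_def)
next
  case (Suc m)
  let ?A = "kron_list (map f [1..<Suc m+1])"
  have IH: "?A \<in> carrier_mat (\<kappa>^Suc m) 1 \<and>
    (\<forall>r<\<kappa>^Suc m. ?A $$ (r,0) = (\<Prod>k\<in>{1..Suc m}. f k $$ (r div \<kappa>^(Suc m - k) mod \<kappa>, 0)))"
    using Suc by auto
  have fS: "f (Suc (Suc m)) \<in> carrier_mat \<kappa> 1" using Suc.prems by auto
  have eq: "kron_list (map f [1..<Suc (Suc m)+1]) = kron ?A (f (Suc (Suc m)))"
    unfolding kron_list_def map_upt_snoc[of f "Suc m"]
    by (rule foldl_snoc_ht) simp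
  show ?case
  proof (intro conjI allI impI)
    show "kron_list (map f [1..<Suc (Suc m)+1]) \<in> carrier_mat (\<kappa>^Suc (Suc m)) 1"
      unfolding eq kron_def using IH fS by (auto simp: mult.commute)
    fix r assume r: "r < \<kappa>^Suc (Suc m)"
    have k0: "\<kappa> > 0" using r by (cases "\<kappa> = 0") auto
    have rd: "r div \<kappa> < \<kappa>^Suc m" using r k0 by (simp add: div_less_iff_less_mult mult.commute)
    have "kron_list (map f [1..<Suc (Suc m)+1]) $$ (r,0) = ?A $$ (r div \<kappa>, 0) * f (Suc (Suc m)) $$ (r mod \<kappa>, 0)"
      unfolding eq kron_def using IH fS r by (auto simp: mult.commute)
    also have "?A $$ (r div \<kappa>, 0) = (\<Prod>k\<in>{1..Suc m}. f k $$ (r div \<kappa>^(Suc (Suc m) - k) mod \<kappa>, 0))"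
    proof -
      have "?A $$ (r div \<kappa>, 0) = (\<Prod>k\<in>{1..Suc m}. f k $$ (r div \<kappa> div \<kappa>^(Suc m - k) mod \<kappa>, 0))"
        using IH rd by auto
      also have "\<dots> = (\<Prod>k\<in>{1..Suc m}. f k $$ (r div \<kappa>^(Suc (Suc m) - k) mod \<kappa>, 0))"
      proof (rule prod.cong[OF refl])
        fix k assume k: "k \<in> {1..Suc m}"
        have "\<kappa> ^ (Suc (Suc m) - k) = \<kappa> * \<kappa>^(Suc m-k)" using k by (simp add: Suc_diff_le)
        then show "f k $$ (r div \<kappa> div \<kappa>^(Suc m - k) mod \<kappa>, 0) = f k $$ (r div \<kappa>^(Suc (Suc m) - k) mod \<kappa>, 0)"
          by (simp add: div_mult2_eq)
      qed
      finally show ?thesis .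
    qed
    finally show "kron_list (map f [1..<Suc (Suc m)+1]) $$ (r,0) =
        (\<Prod>k\<in>{1..Suc (Suc m)}. f k $$ (r div \<kappa>^(Suc (Suc m) - k) mod \<kappa>, 0))"
      by (simp add: prod.cl_ivl_Suc)
  qed
qed



lemma prod_ind: "finite A \<Longrightarrow> (\<Prod>k\<in>A. if P k then 1 else (0::real)) = (if \<forall>k\<in>A. P k then 1 else 0)"
  by (induction A rule: finite_induct) auto

lemma delta_carrier: "delta \<kappa> j \<in> carrier_mat \<kappa> 1" by (simp add: delta_def)

lemma pv_entry:
  assumes n: "n \<ge> 1" and x: "x \<in> profiles n \<kappa>"
  shows "profile_vec n \<kappa> x \<in> carrier_mat (\<kappa>^n) 1 \<and>
    (\<forall>r<\<kappa>^n. profile_vec n \<kappa> x $$ (r,0) = (if dec n \<kappa> r = x then 1 else 0))"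
proof -
  obtain m where m: "n = Suc m" using n by (cases n) auto
  have K: "kron_list (map (\<lambda>k. delta \<kappa> (x k)) [1..<Suc m+1]) \<in> carrier_mat (\<kappa>^Suc m) 1 \<and>
    (\<forall>r<\<kappa>^Suc m. kron_list (map (\<lambda>k. delta \<kappa> (x k)) [1..<Suc m+1]) $$ (r,0) =
        (\<Prod>k\<in>{1..Suc m}. delta \<kappa> (x k) $$ (r div \<kappa>^(Suc m - k) mod \<kappa>, 0)))"
    by (rule kron_entry) (metis One_nat_def delta_carrier)
  show ?thesis
  proof (intro conjI allI impI)
    show "profile_vec n \<kappa> x \<in> carrier_mat (\<kappa>^n) 1" using K m by (simp add: profile_vec_def)
    fix r assume r: "r < \<kappa>^n"
    have k0: "\<kappa> > 0" using r n by (cases "\<kappa> = 0") (auto simp: power_0_left)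
    have "profile_vec n \<kappa> x $$ (r,0) = (\<Prod>k\<in>{1..n}. delta \<kappa> (x k) $$ (r div \<kappa>^(n - k) mod \<kappa>, 0))"
      using K m r by (simp add: profile_vec_def)
    also have "\<dots> = (\<Prod>k\<in>{1..n}. if r div \<kappa>^(n - k) mod \<kappa> + 1 = x k then 1 else 0)"
      using k0 by (intro prod.cong refl) (simp add: delta_def)
    also have "\<dots> = (if \<forall>k\<in>{1..n}. r div \<kappa>^(n - k) mod \<kappa> + 1 = x k then 1 else 0)"
      by (rule prod_ind) simp
    also have "(\<forall>k\<in>{1..n}. r div \<kappa>^(n - k) mod \<kappa> + 1 = x k) = (dec n \<kappa> r = x)"
      using x by (auto simp: dec_def fun_eq_iff profiles_def PiE_def extensional_def)
    finally show "profile_vec n \<kappa> x $$ (r,0) = (if dec n \<kappa> r = x then 1 else 0)" .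
  qed
qed

lemma Phi_entry:
  assumes i: "i \<in> {1..n}"
  shows "Phi \<kappa> n i \<in> carrier_mat \<kappa> (\<kappa>^n) \<and>
    (\<forall>a<\<kappa>. \<forall>col<\<kappa>^n. Phi \<kappa> n i $$ (a,col) = (if a = col div \<kappa>^(n-i) mod \<kappa> then 1 else 0))"
proof -
  have pw: "\<kappa>^(i-1) * \<kappa> * \<kappa>^(n-i) = \<kappa>^n"
    using i by (metis Suc_diff_le atLeastAtMost_iff diff_Suc_1 le_add_diff_inverse2 mult.commute power_Suc power_add Suc_le_eq)
  show ?thesis
  proof (intro conjI allI impI)
    show "Phi \<kappa> n i \<in> carrier_mat \<kappa> (\<kappa>^n)"
      using pw by (simp add: Phi_def kron_def ones_def)
    fix a col assume a: "a < \<kappa>" and col: "col < \<kappa>^n"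
    have q: "col div \<kappa>^(n-i) < \<kappa>^(i-1) * \<kappa>"
      using col pw by (metis div_less_iff_less_mult mult.commute nat_0_less_mult_iff zero_less_power gr_zeroI less_nat_zero_code)
    have q2: "col div \<kappa>^(n-i) div \<kappa> < \<kappa>^(i-1)"
      using q by (metis div_less_iff_less_mult mult.commute gr_zeroI less_nat_zero_code mult_0_right)
    show "Phi \<kappa> n i $$ (a,col) = (if a = col div \<kappa>^(n-i) mod \<kappa> then 1 else 0)"
      using a col q q2 pw by (simp add: Phi_def kron_def ones_def)
  qed
qed

lemma T_entry:
  assumes n: "n \<ge> 1" and \<sigma>: "\<sigma> permutes {1..n}"
  shows "T_mat \<kappa> n \<sigma> \<in> carrier_mat (\<kappa>^n) (\<kappa>^n) \<and>
    (\<forall>r<\<kappa>^n. \<forall>col<\<kappa>^n. T_mat \<kappa> n \<sigma> $$ (r,col) =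
       (if dec n \<kappa> r = (\<lambda>j. dec n \<kappa> col (Hilbert_Choice.inv \<sigma> j)) then 1 else 0))"
proof -
  obtain m where m: "n = Suc m" using n by (cases n) auto
  have inv\<sigma>: "Hilbert_Choice.inv \<sigma> permutes {1..n}" using \<sigma> by (rule permutes_inv)
  have invin: "\<And>k. k \<in> {1..n} \<Longrightarrow> Hilbert_Choice.inv \<sigma> k \<in> {1..n}"
    using permutes_in_image[OF inv\<sigma>] by blast
  have invout: "\<And>k. k \<notin> {1..n} \<Longrightarrow> Hilbert_Choice.inv \<sigma> k = k"
    using permutes_not_in[OF inv\<sigma>] by blast
  have K: "khatri_rao_list (map (\<lambda>k. Phi \<kappa> n (Hilbert_Choice.inv \<sigma> k)) [1..<Suc m+1]) \<in> carrier_mat (\<kappa>^Suc m) (\<kappa>^n) \<and>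
    (\<forall>r<\<kappa>^Suc m. \<forall>c<\<kappa>^n. khatri_rao_list (map (\<lambda>k. Phi \<kappa> n (Hilbert_Choice.inv \<sigma> k)) [1..<Suc m+1]) $$ (r,c) =
        (\<Prod>k\<in>{1..Suc m}. Phi \<kappa> n (Hilbert_Choice.inv \<sigma> k) $$ (r div \<kappa>^(Suc m - k) mod \<kappa>, c)))"
    by (rule kr_entry) (use Phi_entry invin m in blast)
  show ?thesis
  proof (intro conjI allI impI)
    show "T_mat \<kappa> n \<sigma> \<in> carrier_mat (\<kappa>^n) (\<kappa>^n)" using K m by (simp add: T_mat_def)
    fix r col assume r: "r < \<kappa>^n" and col: "col < \<kappa>^n"
    have k0: "\<kappa> > 0" using r n by (cases "\<kappa> = 0") (auto simp: power_0_left)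
    have "T_mat \<kappa> n \<sigma> $$ (r,col) = (\<Prod>k\<in>{1..n}. Phi \<kappa> n (Hilbert_Choice.inv \<sigma> k) $$ (r div \<kappa>^(n - k) mod \<kappa>, col))"
      using K m r col by (simp add: T_mat_def)
    also have "\<dots> = (\<Prod>k\<in>{1..n}. if r div \<kappa>^(n - k) mod \<kappa> = col div \<kappa>^(n - Hilbert_Choice.inv \<sigma> k) mod \<kappa> then 1 else 0)"
      using k0 col Phi_entry invin by (intro prod.cong refl) simp
    also have "\<dots> = (if \<forall>k\<in>{1..n}. r div \<kappa>^(n - k) mod \<kappa> = col div \<kappa>^(n - Hilbert_Choice.inv \<sigma> k) mod \<kappa> then 1 else 0)"
      by (rule prod_ind) simp
    also have "(\<forall>k\<in>{1..n}. r div \<kappa>^(n - k) mod \<kappa> = col div \<kappa>^(n - Hilbert_Choice.inv \<sigma> k) mod \<kappa>)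
        = (dec n \<kappa> r = (\<lambda>j. dec n \<kappa> col (Hilbert_Choice.inv \<sigma> j)))"
      using invin invout by (auto simp: dec_def fun_eq_iff)
    finally show "T_mat \<kappa> n \<sigma> $$ (r,col) = (if dec n \<kappa> r = (\<lambda>j. dec n \<kappa> col (Hilbert_Choice.inv \<sigma> j)) then 1 else 0)" .
  qed
qed



lemma sum_single: "finite A \<Longrightarrow> a \<in> A \<Longrightarrow> (\<And>b. b \<in> A \<Longrightarrow> b \<noteq> a \<Longrightarrow> f b = 0) \<Longrightarrow> sum f A = f a"
  by (simp add: sum.remove sum.neutral)

lemma row_pv:
  assumes n: "n \<ge> 1" and v: "v \<in> carrier_mat 1 (\<kappa>^n)" and x: "x \<in> profiles n \<kappa>"
    and r0: "r0 < \<kappa>^n" "dec n \<kappa> r0 = x"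
  shows "(v * profile_vec n \<kappa> x) $$ (0,0) = v $$ (0,r0)"
proof -
  note P = pv_entry[OF n x]
  have "(v * profile_vec n \<kappa> x) $$ (0,0) = (\<Sum>i\<in>{0..<\<kappa>^n}. v $$ (0,i) * profile_vec n \<kappa> x $$ (i,0))"
    using v conjunct1[OF P] by (simp add: scalar_prod_def index_mult_mat)
  also have "\<dots> = v $$ (0,r0) * profile_vec n \<kappa> x $$ (r0,0)"
  proof (rule sum_single)
    fix b assume "b \<in> {0..<\<kappa>^n}" "b \<noteq> r0"
    then have "dec n \<kappa> b \<noteq> x" using dec_inj r0 by auto
    then show "v $$ (0,b) * profile_vec n \<kappa> x $$ (b,0) = 0" using P \<open>b \<in> _\<close> by simp
  qed (use r0 in auto)
  also have "\<dots> = v $$ (0,r0)" using P r0 by simp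
  finally show ?thesis .
qed

lemma struct_row_eq:
  assumes n: "n \<ge> 1" and k: "\<kappa> \<ge> 1"
  shows "struct_row n \<kappa> c i = mat 1 (\<kappa>^n) (\<lambda>(_,r). c i (dec n \<kappa> r))"
  unfolding struct_row_def
proof (rule the_equality)
  let ?w = "mat 1 (\<kappa>^n) (\<lambda>(_,r). c i (dec n \<kappa> r))"
  show "?w \<in> carrier_mat 1 (\<kappa>^n) \<and> (\<forall>x\<in>profiles n \<kappa>. (?w * profile_vec n \<kappa> x) $$ (0,0) = c i x)"
  proof (intro conjI ballI)
    show "?w \<in> carrier_mat 1 (\<kappa>^n)" by simp
    fix x assume x: "x \<in> profiles n \<kappa>"
    obtain r0 where r0: "r0 < \<kappa>^n" "dec n \<kappa> r0 = x" using dec_surj[OF k x] by blast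
    show "(?w * profile_vec n \<kappa> x) $$ (0,0) = c i x"
      using row_pv[OF n _ x r0] r0 by simp
  qed
  fix v assume v: "v \<in> carrier_mat 1 (\<kappa>^n) \<and> (\<forall>x\<in>profiles n \<kappa>. (v * profile_vec n \<kappa> x) $$ (0,0) = c i x)"
  show "v = ?w"
  proof (rule eq_matI)
    fix a r assume a: "a < dim_row ?w" and r: "r < dim_col ?w"
    have a0: "a = 0" using a by simp
    have x: "dec n \<kappa> r \<in> profiles n \<kappa>" using dec_in k by blast
    have "v $$ (0, r) = (v * profile_vec n \<kappa> (dec n \<kappa> r)) $$ (0,0)"
      using row_pv[OF n _ x] v r by simp
    also have "\<dots> = c i (dec n \<kappa> r)" using v x by blast
    finally show "v $$ (a,r) = ?w $$ (a,r)" using a0 r by simp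
  qed (use v in auto)
qed

lemma struct_vec_entry:
  assumes n: "n \<ge> 1" and k: "\<kappa> \<ge> 1" and j: "j < n * \<kappa>^n"
  shows "struct_vec n \<kappa> c $$ (0,j) = c (j div \<kappa>^n + 1) (dec n \<kappa> (j mod \<kappa>^n))"
proof -
  have "j mod \<kappa>^n < \<kappa>^n" using k by simp
  then show ?thesis using j by (simp add: struct_vec_def struct_row_eq[OF n k])
qed



lemma K_carrier:
  assumes n: "n \<ge> 1" and \<sigma>: "\<sigma> permutes {1..n}"
  shows "kron (perm_mat n \<sigma>) (s \<cdot>\<^sub>m T_mat \<kappa> n \<sigma>) \<in> carrier_mat (n * \<kappa>^n) (n * \<kappa>^n)"
  using conjunct1[OF T_entry[OF n \<sigma>, of \<kappa>]] by (simp add: kron_def perm_mat_def)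

lemma K_entry:
  assumes n: "n \<ge> 1" and \<sigma>: "\<sigma> permutes {1..n}" and k: "\<kappa> \<ge> 1"
    and b: "b < n * \<kappa>^n" and j: "j < n * \<kappa>^n"
  shows "kron (perm_mat n \<sigma>) (s \<cdot>\<^sub>m T_mat \<kappa> n \<sigma>) $$ (b,j) =
     (if b div \<kappa>^n + 1 = \<sigma> (j div \<kappa>^n + 1) then 1 else 0) *
     (s * (if dec n \<kappa> (b mod \<kappa>^n) = (\<lambda>t. dec n \<kappa> (j mod \<kappa>^n) (Hilbert_Choice.inv \<sigma> t)) then 1 else 0))"
proof -
  note T = T_entry[OF n \<sigma>, of \<kappa>]
  have N: "\<kappa>^n > 0" using k by simp
  have bd: "b div \<kappa>^n < n" "j div \<kappa>^n < n" using b j N by (auto simp: div_less_iff_less_mult)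
  have bm: "b mod \<kappa>^n < \<kappa>^n" "j mod \<kappa>^n < \<kappa>^n" using N by auto
  have dr: "dim_row (T_mat \<kappa> n \<sigma>) = \<kappa>^n" "dim_col (T_mat \<kappa> n \<sigma>) = \<kappa>^n" using T by auto
  have Te: "T_mat \<kappa> n \<sigma> $$ (b mod \<kappa>^n, j mod \<kappa>^n) = (if dec n \<kappa> (b mod \<kappa>^n) = (\<lambda>t. dec n \<kappa> (j mod \<kappa>^n) (Hilbert_Choice.inv \<sigma> t)) then 1 else 0)"
    using T bm by blast
  show ?thesis using b j bd bm by (simp add: kron_def perm_mat_def dr Te)
qed

lemma VK_entry:
  assumes n: "n \<ge> 1" and \<sigma>: "\<sigma> permutes {1..n}" and k: "\<kappa> \<ge> 1" and j: "j < n * \<kappa>^n"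
  shows "(struct_vec n \<kappa> c * kron (perm_mat n \<sigma>) (real_of_int (sign \<sigma>) \<cdot>\<^sub>m T_mat \<kappa> n \<sigma>)) $$ (0,j) =
     real_of_int (sign \<sigma>) * c (\<sigma> (j div \<kappa>^n + 1)) (\<lambda>t. dec n \<kappa> (j mod \<kappa>^n) (Hilbert_Choice.inv \<sigma> t))"
proof -
  define N where "N = \<kappa>^n"
  define s where "s = real_of_int (sign \<sigma>)"
  define K where "K = kron (perm_mat n \<sigma>) (s \<cdot>\<^sub>m T_mat \<kappa> n \<sigma>)"
  define V where "V = struct_vec n \<kappa> c"
  define y where "y = (\<lambda>t. dec n \<kappa> (j mod N) (Hilbert_Choice.inv \<sigma> t))"
  define p where "p = j div N"
  have N0: "N > 0" using k by (simp add: N_def)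
  have p: "p < n" using j N0 by (simp add: p_def N_def div_less_iff_less_mult)
  have inv\<sigma>: "Hilbert_Choice.inv \<sigma> permutes {1..n}" using \<sigma> by (rule permutes_inv)
  have y: "y \<in> profiles n \<kappa>"
  proof -
    have "dec n \<kappa> (j mod N) \<in> profiles n \<kappa>" using dec_in k by blast
    then show ?thesis
      using permutes_in_image[OF inv\<sigma>] permutes_not_in[OF inv\<sigma>]
      by (auto simp: y_def profiles_def PiE_def extensional_def Pi_def)
  qed
  obtain rs where rs: "rs < N" "dec n \<kappa> rs = y" using dec_surj[OF k y] N_def by blast
  have sp: "\<sigma> (p+1) \<in> {1..n}" using permutes_in_image[OF \<sigma>] p by auto
  define a where "a = (\<sigma> (p+1) - 1) * N + rs"
  have a: "a < n * N"
  proof -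
    have "\<sigma> (p+1) - 1 < n" using sp by auto
    then have "(\<sigma> (p+1) - 1) + 1 \<le> n" by simp
    then have "((\<sigma> (p+1) - 1) + 1) * N \<le> n * N" by (rule mult_right_mono) simp
    then show ?thesis using rs unfolding a_def by (simp add: algebra_simps)
  qed
  have adiv: "a div N = \<sigma> (p+1) - 1" and amod: "a mod N = rs" using rs N0 by (auto simp: a_def)
  have Vc: "V \<in> carrier_mat 1 (n*N)" by (simp add: V_def struct_vec_def N_def)
  have Kc: "K \<in> carrier_mat (n*N) (n*N)" using K_carrier[OF n \<sigma>] by (simp add: K_def N_def)
  have "(V * K) $$ (0,j) = (\<Sum>b\<in>{0..<n*N}. V $$ (0,b) * K $$ (b,j))"
    using Vc Kc j by (simp add: scalar_prod_def index_mult_mat N_def)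
  also have "\<dots> = V $$ (0,a) * K $$ (a,j)"
  proof (rule sum_single)
    fix b assume b: "b \<in> {0..<n*N}" "b \<noteq> a"
    have Kb: "K $$ (b,j) = (if b div N + 1 = \<sigma> (p + 1) then 1 else 0) *
     (s * (if dec n \<kappa> (b mod N) = y then 1 else 0))"
      using K_entry[OF n \<sigma> k, of b j s] b j by (simp add: K_def N_def y_def p_def)
    have "K $$ (b,j) = 0"
    proof (cases "b div N + 1 = \<sigma> (p + 1)")
      case True
      have "b mod N \<noteq> rs"
      proof
        assume "b mod N = rs"
        then have "b = a" using True sp by (metis a_def add_diff_cancel_right' div_mult_mod_eq mult.commute)
        then show False using b by simp
      qed
      then have "dec n \<kappa> (b mod N) \<noteq> y" using dec_inj rs N0 N_def by (metis mod_less_divisor)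
      then show ?thesis using Kb by simp
    qed (use Kb in simp)
    then show "V $$ (0,b) * K $$ (b,j) = 0" by simp
  qed (use a in auto)
  also have "K $$ (a,j) = s"
    using K_entry[OF n \<sigma> k, of a j s] a j adiv amod rs sp by (simp add: K_def N_def y_def p_def)
  also have "V $$ (0,a) = c (\<sigma> (p+1)) y"
    using struct_vec_entry[OF n k, of a c] a adiv amod rs sp by (simp add: V_def N_def)
  finally show ?thesis by (simp add: V_def K_def s_def y_def p_def N_def)
qed



theorem theorem3p17:
  fixes n \<kappa> :: nat and c :: "nat \<Rightarrow> (nat \<Rightarrow> nat) \<Rightarrow> real"
  assumes "n \<ge> 2" and "\<kappa> \<ge> 1"
  shows "skew_symmetric n \<kappa> c \<longleftrightarrow>
    (\<forall>\<sigma>. \<sigma> permutes {1..n} \<longrightarrow>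
       struct_vec n \<kappa> c = struct_vec n \<kappa> c *
         kron (perm_mat n \<sigma>) (real_of_int (sign \<sigma>) \<cdot>\<^sub>m T_mat \<kappa> n \<sigma>))"
proof -
  have n: "n \<ge> 1" using assms(1) by simp
  note k = assms(2)
  have N0: "\<kappa>^n > 0" using k by simp
  have Vc: "struct_vec n \<kappa> c \<in> carrier_mat 1 (n*\<kappa>^n)" by (simp add: struct_vec_def)
  show ?thesis
  proof
    assume sk: "skew_symmetric n \<kappa> c"
    show "\<forall>\<sigma>. \<sigma> permutes {1..n} \<longrightarrow>
       struct_vec n \<kappa> c = struct_vec n \<kappa> c *
         kron (perm_mat n \<sigma>) (real_of_int (sign \<sigma>) \<cdot>\<^sub>m T_mat \<kappa> n \<sigma>)"
    proof (intro allI impI)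
      fix \<sigma> assume \<sigma>: "\<sigma> permutes {1..n}"
      have Kc: "kron (perm_mat n \<sigma>) (real_of_int (sign \<sigma>) \<cdot>\<^sub>m T_mat \<kappa> n \<sigma>) \<in> carrier_mat (n*\<kappa>^n) (n*\<kappa>^n)"
        by (rule K_carrier[OF n \<sigma>])
      show "struct_vec n \<kappa> c = struct_vec n \<kappa> c *
         kron (perm_mat n \<sigma>) (real_of_int (sign \<sigma>) \<cdot>\<^sub>m T_mat \<kappa> n \<sigma>)"
      proof (rule eq_matI)
        fix i j assume i: "i < dim_row (struct_vec n \<kappa> c *
         kron (perm_mat n \<sigma>) (real_of_int (sign \<sigma>) \<cdot>\<^sub>m T_mat \<kappa> n \<sigma>))"
          and j: "j < dim_col (struct_vec n \<kappa> c *
         kron (perm_mat n \<sigma>) (real_of_int (sign \<sigma>) \<cdot>\<^sub>m T_mat \<kappa> n \<sigma>))"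
        have i0: "i = 0" using i Vc by simp
        have jl: "j < n * \<kappa>^n" using j Kc by simp
        have "j div \<kappa>^n < n" using jl N0 by (simp add: div_less_iff_less_mult)
        then have pin: "j div \<kappa>^n + 1 \<in> {1..n}" by auto
        have xin: "dec n \<kappa> (j mod \<kappa>^n) \<in> profiles n \<kappa>" using dec_in k by blast
        show "struct_vec n \<kappa> c $$ (i,j) = (struct_vec n \<kappa> c *
         kron (perm_mat n \<sigma>) (real_of_int (sign \<sigma>) \<cdot>\<^sub>m T_mat \<kappa> n \<sigma>)) $$ (i,j)"
          using struct_vec_entry[OF n k jl] VK_entry[OF n \<sigma> k jl] i0
            sk[unfolded skew_symmetric_def, rule_format, OF \<sigma> pin xin] by simp
      qed (use Vc Kc in auto)
    qed
  next
    assume H: "\<forall>\<sigma>. \<sigma> permutes {1..n} \<longrightarrow>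
       struct_vec n \<kappa> c = struct_vec n \<kappa> c *
         kron (perm_mat n \<sigma>) (real_of_int (sign \<sigma>) \<cdot>\<^sub>m T_mat \<kappa> n \<sigma>)"
    show "skew_symmetric n \<kappa> c"
      unfolding skew_symmetric_def
    proof (intro allI impI ballI)
      fix \<sigma> i x assume \<sigma>: "\<sigma> permutes {1..n}" and i: "i \<in> {1..n}" and x: "x \<in> profiles n \<kappa>"
      obtain r where r: "r < \<kappa>^n" "dec n \<kappa> r = x" using dec_surj[OF k x] by blast
      define j where "j = (i - 1) * \<kappa>^n + r"
      have jl: "j < n * \<kappa>^n"
      proof -
        have "(i - 1) + 1 \<le> n" using i by auto
        then have "((i - 1) + 1) * \<kappa>^n \<le> n * \<kappa>^n" by (rule mult_right_mono) simp
        then show ?thesis using r unfolding j_def by (simp add: algebra_simps)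
      qed
      have jd: "j div \<kappa>^n + 1 = i" and jm: "j mod \<kappa>^n = r" using r i N0 by (auto simp: j_def)
      have "struct_vec n \<kappa> c $$ (0,j) = (struct_vec n \<kappa> c *
         kron (perm_mat n \<sigma>) (real_of_int (sign \<sigma>) \<cdot>\<^sub>m T_mat \<kappa> n \<sigma>)) $$ (0,j)"
        using H \<sigma> by metis
      then show "c i x = real_of_int (sign \<sigma>) * c (\<sigma> i) (\<lambda>j. x (Hilbert_Choice.inv \<sigma> j))"
        using struct_vec_entry[OF n k jl] VK_entry[OF n \<sigma> k jl] jd jm r by simp
    qed
  qed
qed


end
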